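(* Let $J^P_{k,n}$ be the number of maximal configurations resistant to predators of length $n$ with exactly $k$ occupied lots (the empty configuration of length $0$ being counted once). Then, as formal power series, $$\sum_{n\ge 0}\sum_{k\ge 0} J^P_{k,n}x^ky^n = \frac{1 + xy - (x - x^2)y^2 - x^2y^3}{1 - xy^2 - x^2y^3}.$$
   Context: A configuration of length $n\ge 0$ is a binary string $c_1c_2\cdots c_n$; $c_k=1$ means lot $k$ is occupied by a house, $c_k=0$ that it is empty. A house at position $k$ is blocked if $2\le k\le n-1$ and $c_{k-1}=c_{k+1}=1$ (lots beyond the ends never obstruct sunlight). A configuration is permissible if no house is blocked; maximal if it is permissible and, for every $k$ with $c_k=0$, setting $c_k=1$ yields a non-permissible string. A maximal configuration is resistant to predators if, for every $k$ with $c_k=0$, setting $c_k=1$ makes the new house at position $k$ blocked. *)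

theory Defs
  imports "HOL-Computational_Algebra.Formal_Power_Series"
begin

text \<open>Configurations are lists of booleans; list index i (0-based) is lot i+1.\<close>

definition blocked :: "bool list \<Rightarrow> nat \<Rightarrow> bool" where
  "blocked c i \<longleftrightarrow> i < length c \<and> c ! i \<and> 0 < i \<and> i + 1 < length c \<and> c ! (i - 1) \<and> c ! (i + 1)"

definition permissible :: "bool list \<Rightarrow> bool" where
  "permissible c \<longleftrightarrow> (\<forall>i < length c. \<not> blocked c i)"

definition maximal :: "bool list \<Rightarrow> bool" where
  "maximal c \<longleftrightarrow> permissible c \<and> (\<forall>i < length c. \<not> c ! i \<longrightarrow> \<not> permissible (c[i := True]))"

definition resistant :: "bool list \<Rightarrow> bool" where
  "resistant c \<longleftrightarrow> maximal c \<and> (\<forall>i < length c. \<not> c ! i \<longrightarrow> blocked (c[i := True]) i)"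

definition JP :: "nat \<Rightarrow> nat \<Rightarrow> nat" where
  "JP k n = card {c :: bool list. length c = n \<and> resistant c \<and> count_list c True = k}"

text \<open>Bivariate generating function: outer variable y (length n), inner variable x (houses k).\<close>
definition JP_gf :: "rat fps fps" where
  "JP_gf = Abs_fps (\<lambda>n. Abs_fps (\<lambda>k. of_nat (JP k n)))"

end

theory Submission
  imports Defs
begin


definition Zt :: "bool list \<Rightarrow> bool" where
  "Zt c \<longleftrightarrow> (\<forall>i<length c. \<not> c!i \<longrightarrow> i+1 < length c \<and> (0 < i \<longrightarrow> c!(i-1)) \<and> c!(i+1))"

lemma resistant_iff: "resistant c \<longleftrightarrow> permissible c \<and> (c \<noteq> [] \<longrightarrow> c!0) \<and> Zt c"
proof -
  have bl: "blocked (c[i := True]) i \<longleftrightarrow> i < length c \<and> 0 < i \<and> i + 1 < length c \<and> c!(i-1) \<and> c!(i+1)" for i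
    by (auto simp: blocked_def nth_list_update)
  have "resistant c \<longleftrightarrow> permissible c \<and> (\<forall>i<length c. \<not> c!i \<longrightarrow> 0 < i \<and> i + 1 < length c \<and> c!(i-1) \<and> c!(i+1))"
  proof
    assume r: "resistant c"
    then show "permissible c \<and> (\<forall>i<length c. \<not> c!i \<longrightarrow> 0 < i \<and> i + 1 < length c \<and> c!(i-1) \<and> c!(i+1))"
      unfolding resistant_def maximal_def bl by blast
  next
    assume r: "permissible c \<and> (\<forall>i<length c. \<not> c!i \<longrightarrow> 0 < i \<and> i + 1 < length c \<and> c!(i-1) \<and> c!(i+1))"
    have "\<not> permissible (c[i := True])" if "i < length c" "\<not> c!i" for i
    proof -
      have "blocked (c[i := True]) i" using r that bl by blast
      then show ?thesis unfolding permissible_def using that by auto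
    qed
    then show "resistant c" unfolding resistant_def maximal_def using r bl by blast
  qed
  also have "\<dots> \<longleftrightarrow> permissible c \<and> (c \<noteq> [] \<longrightarrow> c!0) \<and> Zt c"
    unfolding Zt_def by (auto, metis gr0I length_greater_0_conv) 
  finally show ?thesis .
qed

lemma perm_Nil[simp]: "permissible []" by (simp add: permissible_def)

lemma perm_Cons[simp]: "permissible (a#l) \<longleftrightarrow> (2 \<le> length l \<longrightarrow> \<not>(a \<and> l!0 \<and> l!1)) \<and> permissible l"
proof -
  have b0: "\<not> blocked d 0" for d by (simp add: blocked_def)
  have b1: "blocked (a#l) (Suc j) \<longleftrightarrow> (if j = 0 then a \<and> 2 \<le> length l \<and> l!0 \<and> l!1 else blocked l j)" for j
    by (cases j) (auto simp: blocked_def)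
  have "permissible (a#l) \<longleftrightarrow> (\<forall>j<length l. \<not> blocked (a#l) (Suc j))"
    unfolding permissible_def length_Cons All_less_Suc2 using b0 by simp
  also have "\<dots> \<longleftrightarrow> (2 \<le> length l \<longrightarrow> \<not>(a \<and> l!0 \<and> l!1)) \<and> permissible l"
  proof -
    have "permissible l \<longleftrightarrow> (\<forall>j<length l. j \<noteq> 0 \<longrightarrow> \<not> blocked l j)"
      unfolding permissible_def using b0 by metis
    moreover have "(\<forall>j<length l. \<not> blocked (a#l) (Suc j)) \<longleftrightarrow>
       (0 < length l \<longrightarrow> \<not> (a \<and> 2 \<le> length l \<and> l!0 \<and> l!1)) \<and> (\<forall>j<length l. j \<noteq> 0 \<longrightarrow> \<not> blocked l j)"
      unfolding b1 by (auto split: if_splits)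
    ultimately show ?thesis by auto
  qed
  finally show ?thesis .
qed

lemma Zt_Nil[simp]: "Zt []" by (simp add: Zt_def)

lemma Zt_Cons[simp]: "Zt (b#r) \<longleftrightarrow> (\<not> b \<longrightarrow> r \<noteq> [] \<and> r!0) \<and> (r \<noteq> [] \<and> \<not> r!0 \<longrightarrow> b) \<and> Zt r"
proof -
  have "Zt (b#r) \<longleftrightarrow> (\<not> b \<longrightarrow> r \<noteq> [] \<and> r!0) \<and> (\<forall>j<length r. \<not> r!j \<longrightarrow> j+1 < length r \<and> (if j = 0 then b else r!(j-1)) \<and> r!(j+1))"
    unfolding Zt_def length_Cons All_less_Suc2 by (simp add: nth_Cons')
  also have "\<dots> \<longleftrightarrow> (\<not> b \<longrightarrow> r \<noteq> [] \<and> r!0) \<and> (r \<noteq> [] \<and> \<not> r!0 \<longrightarrow> b) \<and> Zt r"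
    unfolding Zt_def by (auto split: if_splits)
  finally show ?thesis .
qed

fun good :: "bool list \<Rightarrow> bool" where
  "good [] = True"
| "good [True] = True"
| "good [True, True] = True"
| "good (True # False # r) = (r \<noteq> [] \<and> good r)"
| "good (True # True # False # r) = (r \<noteq> [] \<and> good r)"
| "good _ = False"

lemma good_iff: "good c \<longleftrightarrow> permissible c \<and> (c \<noteq> [] \<longrightarrow> c!0) \<and> Zt c"
  by (induction c rule: good.induct) auto

lemma resistant_good: "resistant c \<longleftrightarrow> good c"
  using good_iff resistant_iff by blast



definition Sne :: "nat \<Rightarrow> nat \<Rightarrow> bool list set" where
  "Sne n k = {c. length c = n \<and> good c \<and> count_list c True = k \<and> c \<noteq> []}"

lemma fin_len: "finite {c :: bool list. length c = n \<and> P c}"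
proof -
  have "finite {c :: bool list. set c \<subseteq> UNIV \<and> length c = n}"
    by (rule finite_lists_length_eq) simp
  then show ?thesis by (rule finite_subset[rotated]) auto
qed

lemma JP_Sne: "JP k n = card (Sne n k) + (if n = 0 \<and> k = 0 then 1 else 0)"
proof -
  have e: "{c :: bool list. length c = n \<and> resistant c \<and> count_list c True = k}
     = Sne n k \<union> {c. c = [] \<and> n = 0 \<and> k = 0}"
    unfolding Sne_def resistant_good by auto
  have "JP k n = card (Sne n k) + card {c :: bool list. c = [] \<and> n = 0 \<and> k = 0}"
    unfolding JP_def e
    by (rule card_Un_disjoint) (auto simp: Sne_def fin_len)
  then show ?thesis by auto
qed

lemma Sne_dec: "Sne n k = {c. c = [True] \<and> n = 1 \<and> k = 1} \<union> {c. c = [True, True] \<and> n = 2 \<and> k = 2}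
  \<union> (\<lambda>r. True # False # r) ` {r. r \<noteq> [] \<and> good r \<and> length r + 2 = n \<and> count_list r True + 1 = k}
  \<union> (\<lambda>r. True # True # False # r) ` {r. r \<noteq> [] \<and> good r \<and> length r + 3 = n \<and> count_list r True + 2 = k}"
  (is "?L = ?R")
proof
  show "?L \<subseteq> ?R"
  proof
    fix c assume "c \<in> ?L"
    then have c: "length c = n" "good c" "count_list c True = k" "c \<noteq> []" by (auto simp: Sne_def)
    show "c \<in> ?R" using c by (cases c rule: good.cases) auto
  qed
next
  show "?R \<subseteq> ?L" by (auto simp: Sne_def)
qed

lemma card_Sne: "card (Sne n k) = (if n = 1 \<and> k = 1 then 1 else 0) + (if n = 2 \<and> k = 2 then 1 else 0)
   + (if 2 \<le> n \<and> 1 \<le> k then card (Sne (n-2) (k-1)) else 0)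
   + (if 3 \<le> n \<and> 2 \<le> k then card (Sne (n-3) (k-2)) else 0)"
proof -
  define A where "A = {c :: bool list. c = [True] \<and> n = 1 \<and> k = 1}"
  define B where "B = {c :: bool list. c = [True, True] \<and> n = 2 \<and> k = 2}"
  define C where "C = (\<lambda>r. True # False # r) ` {r. r \<noteq> [] \<and> good r \<and> length r + 2 = n \<and> count_list r True + 1 = k}"
  define E where "E = (\<lambda>r. True # True # False # r) ` {r. r \<noteq> [] \<and> good r \<and> length r + 3 = n \<and> count_list r True + 2 = k}"
  have fC: "finite C" unfolding C_def by (rule finite_imageI, rule finite_subset[OF _ fin_len[of "n-2" "\<lambda>_. True"]]) auto
  have fE: "finite E" unfolding E_def by (rule finite_imageI, rule finite_subset[OF _ fin_len[of "n-3" "\<lambda>_. True"]]) auto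
  have cA: "card A = (if n = 1 \<and> k = 1 then 1 else 0)" unfolding A_def by auto
  have cB: "card B = (if n = 2 \<and> k = 2 then 1 else 0)" unfolding B_def by auto
  have s2: "{r. r \<noteq> [] \<and> good r \<and> length r + 2 = n \<and> count_list r True + 1 = k}
      = (if 2 \<le> n \<and> 1 \<le> k then Sne (n-2) (k-1) else {})" by (auto simp: Sne_def)
  have s3: "{r. r \<noteq> [] \<and> good r \<and> length r + 3 = n \<and> count_list r True + 2 = k}
      = (if 3 \<le> n \<and> 2 \<le> k then Sne (n-3) (k-2) else {})" by (auto simp: Sne_def)
  have cC: "card C = (if 2 \<le> n \<and> 1 \<le> k then card (Sne (n-2) (k-1)) else 0)"
  proof -
    have "card C = card {r. r \<noteq> [] \<and> good r \<and> length r + 2 = n \<and> count_list r True + 1 = k}"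
      unfolding C_def by (rule card_image) (auto simp: inj_on_def)
    then show ?thesis unfolding s2 by simp
  qed
  have cE: "card E = (if 3 \<le> n \<and> 2 \<le> k then card (Sne (n-3) (k-2)) else 0)"
  proof -
    have "card E = card {r. r \<noteq> [] \<and> good r \<and> length r + 3 = n \<and> count_list r True + 2 = k}"
      unfolding E_def by (rule card_image) (auto simp: inj_on_def)
    then show ?thesis unfolding s3 by simp
  qed
  have "card (Sne n k) = card (A \<union> B \<union> C \<union> E)" unfolding Sne_dec A_def B_def C_def E_def ..
  also have "\<dots> = card A + card B + card C + card E"
  proof -
    have d1: "(A \<union> B \<union> C) \<inter> E = {}" unfolding A_def B_def C_def E_def by auto
    have d2: "(A \<union> B) \<inter> C = {}" unfolding A_def B_def C_def by auto
    have d3: "A \<inter> B = {}" unfolding A_def B_def by auto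
    have fA: "finite A" "finite B" unfolding A_def B_def by auto
    show ?thesis using d1 d2 d3 fA fC fE
      by (simp add: card_Un_disjoint)
  qed
  finally show ?thesis using cA cB cC cE by simp
qed

lemma JP_rec: "(of_nat (JP k n) :: rat) = (if n=0 \<and> k=0 then 1 else if n=1 \<and> k=1 then 1 else if n=2 \<and> k=1 then -1
   else if n=2 \<and> k=2 then 1 else if n=3 \<and> k=2 then -1 else 0)
   + (if 2 \<le> n \<and> 1 \<le> k then of_nat (JP (k-1) (n-2)) else 0)
   + (if 3 \<le> n \<and> 2 \<le> k then of_nat (JP (k-2) (n-3)) else 0)"
  using card_Sne[of n k] JP_Sne[of k n] JP_Sne[of "k-1" "n-2"] JP_Sne[of "k-2" "n-3"]
  by (auto split: if_splits)

unbundle fps_syntax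


definition numc :: "nat \<Rightarrow> nat \<Rightarrow> rat" where
 "numc n k = (if n=0 \<and> k=0 then 1 else if n=1 \<and> k=1 then 1 else if n=2 \<and> k=1 then -1
   else if n=2 \<and> k=2 then 1 else if n=3 \<and> k=2 then -1 else 0)"

lemma JP_rec': "(of_nat (JP k n) :: rat) = numc n k
   + (if 2 \<le> n \<and> 1 \<le> k then of_nat (JP (k-1) (n-2)) else 0)
   + (if 3 \<le> n \<and> 2 \<le> k then of_nat (JP (k-2) (n-3)) else 0)"
  unfolding numc_def by (rule JP_rec)

lemma JP_gf_nth: "JP_gf $ n $ k = of_nat (JP k n)"
  by (simp add: JP_gf_def)

theorem mainTheorem4:
  fixes x y :: "rat fps fps"
  assumes "x = fps_const fps_X" and "y = fps_X"
  shows "JP_gf = (1 + x * y - (x - x ^ 2) * y ^ 2 - x ^ 2 * y ^ 3) * inverse (1 - x * y ^ 2 - x ^ 2 * y ^ 3)"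
proof -
  define D :: "rat fps fps" where "D = 1 - x * y ^ 2 - x ^ 2 * y ^ 3"
  define Nm :: "rat fps fps" where "Nm = 1 + x * y - (x - x ^ 2) * y ^ 2 - x ^ 2 * y ^ 3"
  have D0: "D $ 0 = 1" using assms by (simp add: D_def)
  have Dinv: "D * inverse D = 1"
    unfolding fps_inverse_def using fps_right_inverse[of D 1] D0 by (simp add: fps_lr_inverse_one_one)
  have JD: "JP_gf * D = Nm"
  proof (rule fps_ext, rule fps_ext)
    fix n k
    have e: "JP_gf * D = JP_gf - fps_const fps_X * (fps_X^2 * JP_gf) - fps_const (fps_X^2) * (fps_X^3 * JP_gf)"
      using assms by (simp add: D_def algebra_simps fps_const_power)
    have "(JP_gf * D) $ n $ k = of_nat (JP k n)
       - (if 2 \<le> n \<and> 1 \<le> k then of_nat (JP (k-1) (n-2)) else 0)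
       - (if 3 \<le> n \<and> 2 \<le> k then of_nat (JP (k-2) (n-3)) else 0)"
      unfolding e by (simp add: fps_X_power_mult_nth JP_gf_nth)
    also have "\<dots> = numc n k" using JP_rec'[of k n] by simp
    also have "\<dots> = Nm $ n $ k"
      using assms by (simp add: Nm_def numc_def fps_X_power_mult_nth algebra_simps fps_const_power)
    finally show "(JP_gf * D) $ n $ k = Nm $ n $ k" .
  qed
  have "JP_gf = Nm * inverse D" using JD Dinv by (metis mult.assoc mult_1_right)
  then show ?thesis unfolding Nm_def D_def .
qed
end
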